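(* Let $w,z\in A^+$ and let $z_0\in L$ be the first coordinate of $z$ and $w_m\in L$ be the last coordinate of $w$ determined by $L$ (i.e. the first entry of $\mathrm{sc}_L[z]$ and the last entry of $\mathrm{sc}_L[w]$). Then, (a) $\hat{\mathsf f}(wz)=\hat{\mathsf f}(wz_0){\mathsf f}(z_0)^{-1}\hat{\mathsf f}(z)=\hat{\mathsf f}(w){\mathsf f}(w_m)^{-1}\hat{\mathsf f}(w_mz)$; (b) $\check{\mathsf f}(wz)=\check{\mathsf f}(\check{\mathsf f}(w)\check{\mathsf f}(z))$.
   Context: Let $A$ be an alphabet, $A^+$ the free semigroup and $A^*$ the free monoid on $A$. For a word $w=a_1\cdots a_n$ ($a_i\in A$), $w[p,q]=a_p\cdots a_q$, $w_\alpha=w[1,n-1]$ and $w_\omega=w[2,n]$. Let $L\subseteq A^+$ be a non-empty factorial language (closed under non-empty factors) with $A\subseteq L$, and $\ddot L=\{v\in A^+: v\notin L,\ v_\alpha,v_\omega\in L\}$. For $w\in A^+$, the sequence of coordinates $\mathrm{sc}_L[w]=(w_0,\ddot w_1,w_1,\ldots,\ddot w_m,w_m)$ is defined as follows: $m\ge 0$ is the number of occurrences of elements of $\ddot L$ in $w$ (so $m=0$ iff $w\in L$, in which case $\mathrm{sc}_L[w]=(w)$); if $m>0$, $\ddot w_i=w[p_i,q_i]$ ($i=1,\dots,m$) are the successive occurrences of factors of $w$ in $\ddot L$, $w_0=w[1,q_1-1]$, $w_m=w[p_m+1,n]$ and $w_i=w[p_i+1,q_{i+1}-1]$ for $0<i<m$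 (these are the maximal factors of $w$ lying in $L$, in order). Let $G$ be a group with semigroup presentation $\langle A_G\mid R_G\rangle$; words of $A_G^+$ are identified with the elements of $G$ they represent, and by choosing a representative word for each element, $G$ is viewed as a subset of $A_G^+$. Let $X=A\cup A_G$, $L^1=L\cup\{1\}$, and let ${\mathsf f}:L\cup\ddot L\to G$ be a function. Define $\acute{\mathsf f}(1)=\grave{\mathsf f}(1)=1$, $\hat{\mathsf f}(1)=1_G$; for $w\in L$: $\check{\mathsf f}(w)=\acute{\mathsf f}(w)=\grave{\mathsf f}(w)=w$ and $\hat{\mathsf f}(w)={\mathsf f}(w)$; for $w\in A^+\setminus L$ with $\mathrm{sc}_L[w]=(w_0,\ddot w_1,w_1,\ldots,\ddot w_m,w_m)$: $\check{\mathsf f}(w)=w_0{\mathsf f}(\ddot w_1){\mathsf f}(w_1){\mathsf f}(\ddot w_2)\cdots{\mathsf f}(\ddot w_m)w_m$, $\acute{\mathsf f}(w)={\mathsf f}(w_0){\mathsf f}(\ddot w_1){\mathsf f}(w_1)\cdots{\mathsf f}(\ddot w_m)w_m$, $\grave{\mathsf f}(w)=w_0{\mathsf f}(\ddot w_1){\mathsf f}(w_1)\cdots{\mathsf f}(\ddot w_m){\mathsf f}(w_m)$, $\hat{\mathsf f}(w)={\mathsf f}(w_0){\mathsf f}(\ddot w_1){\mathsf f}(w_1)\cdots{\mathsf f}(\ddot w_m){\mathsf f}(w_m)$ (a product in $G$). Then $\check{\mathsf f}$ is extended to $X^+\to L\cup L^1GL^1$ by setting, for $w=u_0g_1u_1\cdots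 g_nu_n\in X^+\setminus A^+$ with $u_0,u_n\in A^*$, $u_1,\ldots,u_{n-1}\in A^+$, $g_1,\ldots,g_n\in A_G^+$: $\check{\mathsf f}(w)=\grave{\mathsf f}(u_0)g_1\hat{\mathsf f}(u_1)\cdots g_{n-1}\hat{\mathsf f}(u_{n-1})g_n\acute{\mathsf f}(u_n)$ (products of consecutive group elements computed in $G$). In (b), $\check{\mathsf f}(w)\check{\mathsf f}(z)$ is a word in $X^+$ and the outer $\check{\mathsf f}$ is this extension. *)

theory Defs
  imports "HOL-Algebra.Group" "HOL-Library.Product_Lexorder"
begin

text \<open>Words over the alphabet A are lists over the type 'a (A = UNIV :: 'a set);
  A^+ = non-empty lists. Positions are 0-indexed.\<close>

definition factorial_lang :: "'a list set \<Rightarrow> bool" where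
  "factorial_lang L \<longleftrightarrow> (\<forall>v\<in>L. \<forall>x u y. v = x @ u @ y \<and> u \<noteq> [] \<longrightarrow> u \<in> L)"

definition ddot :: "'a list set \<Rightarrow> 'a list set" where
  "ddot L = {v. v \<noteq> [] \<and> v \<notin> L \<and> butlast v \<in> L \<and> tl v \<in> L}"

text \<open>The factor w[p,q] (0-indexed, inclusive).\<close>
definition fac :: "'a list \<Rightarrow> nat \<Rightarrow> nat \<Rightarrow> 'a list" where
  "fac w p q = take (Suc q - p) (drop p w)"

definition occs :: "'a list set \<Rightarrow> 'a list \<Rightarrow> (nat \<times> nat) list" where
  "occs L w = sorted_list_of_set {(p, q). p \<le> q \<and> q < length w \<and> fac w p q \<in> ddot L}"

text \<open>The L-coordinates w_0, ..., w_m: w_0 = w[0,q_1-1], w_i = w[p_i+1, q_(i+1)-1], w_m = w[p_m+1, end].\<close>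
definition lcoords :: "'a list set \<Rightarrow> 'a list \<Rightarrow> 'a list list" where
  "lcoords L w =
     (let os = occs L w;
          starts = 0 # map (\<lambda>(p, q). Suc p) os;
          ends = map snd os @ [length w]
      in map2 (\<lambda>s e. take (e - s) (drop s w)) starts ends)"

definition ddcoords :: "'a list set \<Rightarrow> 'a list \<Rightarrow> 'a list list" where
  "ddcoords L w = map (\<lambda>(p, q). fac w p q) (occs L w)"

text \<open>sc_L[w] = (w_0, ddot w_1, w_1, ..., ddot w_m, w_m).\<close>
definition sc :: "'a list set \<Rightarrow> 'a list \<Rightarrow> 'a list list" where
  "sc L w = hd (lcoords L w) # concat (map2 (\<lambda>d c. [d, c]) (ddcoords L w) (tl (lcoords L w)))"

definition gprod :: "('g, 'b) monoid_scheme \<Rightarrow> 'g list \<Rightarrow> 'g" where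
  "gprod G xs = foldr (\<lambda>x y. x \<otimes>\<^bsub>G\<^esub> y) xs \<one>\<^bsub>G\<^esub>"

text \<open>Words over X = A \<union> A_G are lists of type ('a + 'g) list; a group letter Inr g stands for
  (the representative word of) the group element g.\<close>

definition fhat :: "('g, 'b) monoid_scheme \<Rightarrow> 'a list set \<Rightarrow> ('a list \<Rightarrow> 'g) \<Rightarrow> 'a list \<Rightarrow> 'g" where
  "fhat G L f w = (if w = [] then \<one>\<^bsub>G\<^esub> else if w \<in> L then f w
                   else gprod G (map f (sc L w)))"

definition fcheckA :: "('g, 'b) monoid_scheme \<Rightarrow> 'a list set \<Rightarrow> ('a list \<Rightarrow> 'g) \<Rightarrow> 'a list \<Rightarrow> ('a + 'g) list" where
  "fcheckA G L f w = (if w = [] \<or> w \<in> L then map Inl w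
     else map Inl (hd (sc L w)) @ [Inr (gprod G (map f (butlast (tl (sc L w)))))] @ map Inl (last (sc L w)))"

definition facute :: "('g, 'b) monoid_scheme \<Rightarrow> 'a list set \<Rightarrow> ('a list \<Rightarrow> 'g) \<Rightarrow> 'a list \<Rightarrow> ('a + 'g) list" where
  "facute G L f w = (if w = [] \<or> w \<in> L then map Inl w
     else [Inr (gprod G (map f (butlast (sc L w))))] @ map Inl (last (sc L w)))"

definition fgrave :: "('g, 'b) monoid_scheme \<Rightarrow> 'a list set \<Rightarrow> ('a list \<Rightarrow> 'g) \<Rightarrow> 'a list \<Rightarrow> ('a + 'g) list" where
  "fgrave G L f w = (if w = [] \<or> w \<in> L then map Inl w
     else map Inl (hd (sc L w)) @ [Inr (gprod G (map f (tl (sc L w))))])"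

fun gmerge :: "('g, 'b) monoid_scheme \<Rightarrow> ('a + 'g) list \<Rightarrow> ('a + 'g) list" where
  "gmerge G [] = []"
| "gmerge G (Inr a # Inr b # xs) = gmerge G (Inr (a \<otimes>\<^bsub>G\<^esub> b) # xs)"
| "gmerge G (x # xs) = x # gmerge G xs"

function hatruns :: "('a list \<Rightarrow> 'g) \<Rightarrow> ('a + 'g) list \<Rightarrow> ('a + 'g) list" where
  "hatruns h [] = []"
| "hatruns h (Inr g # xs) = Inr g # hatruns h xs"
| "hatruns h (Inl a # xs) =
     Inr (h (a # map projl (takeWhile isl xs))) # hatruns h (dropWhile isl xs)"
  by pat_completeness auto
termination
  by (relation "measure (\<lambda>(h, xs). length xs)") (auto simp: le_imp_less_Suc length_dropWhile_le)

text \<open>Extension of check-f to X^+: for w = u_0 g_1 u_1 ... g_n u_n,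
  grave(u_0) g_1 hat(u_1) ... g_n acute(u_n) with consecutive group elements multiplied.\<close>
definition fcheck :: "('g, 'b) monoid_scheme \<Rightarrow> 'a list set \<Rightarrow> ('a list \<Rightarrow> 'g) \<Rightarrow> ('a + 'g) list \<Rightarrow> ('a + 'g) list" where
  "fcheck G L f w =
    (if list_all isl w then fcheckA G L f (map projl w)
     else (let u0 = takeWhile isl w;
               un = rev (takeWhile isl (rev w));
               mid = drop (length u0) (take (length w - length un) w)
           in gmerge G (fgrave G L f (map projl u0) @ hatruns (fhat G L f) mid
                        @ facute G L f (map projl un))))"

end

theory Submission
  imports Defs
begin

definition S :: "'a list set \<Rightarrow> 'a list \<Rightarrow> (nat\<times>nat) set" where
  "S L v = {(p, q). p \<le> q \<and> q < length v \<and> fac v p q \<in> ddot L}"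

lemma occs_S: "occs L v = sorted_list_of_set (S L v)"
  by (simp add: occs_def S_def)

lemma sls_sorted: "sorted_wrt (<) xs \<Longrightarrow> sorted_list_of_set (set xs) = xs"
  by (simp add: sorted_list_of_set_sort_remdups strict_sorted_iff distinct_remdups_id sorted_sort_id)

lemma fact_sub:
  assumes "factorial_lang L" "u \<in> L" "take n (drop m u) \<noteq> []"
  shows "take n (drop m u) \<in> L"
proof -
  have "u = take m u @ take n (drop m u) @ drop n (drop m u)" by (metis append_take_drop_id)
  thus ?thesis using assms unfolding factorial_lang_def by blast
qed

lemma fac_ne: "p \<le> q \<Longrightarrow> q < length v \<Longrightarrow> fac v p q \<noteq> []"
  by (simp add: fac_def)

lemma fac_sub: "a \<le> c \<Longrightarrow> c \<le> d \<Longrightarrow> d \<le> b \<Longrightarrow> b < length v \<Longrightarrow>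
   fac v c d = take (Suc d - c) (drop (c - a) (fac v a b))"
  by (simp add: fac_def drop_take min_def)

lemma fac_L:
  assumes "factorial_lang L" "fac v a b \<in> L" "a \<le> c" "c \<le> d" "d \<le> b" "b < length v"
  shows "fac v c d \<in> L"
  using fact_sub[OF assms(1,2), of "Suc d - c" "c - a"] fac_sub[OF assms(3-6)] fac_ne[of c d v] assms
  by auto

lemma fac_all: "v \<noteq> [] \<Longrightarrow> fac v 0 (length v - 1) = v"
  by (simp add: fac_def)

lemma fac_in_L:
  assumes "factorial_lang L" "v \<in> L" "c \<le> d" "d < length v"
  shows "fac v c d \<in> L"
proof -
  have "v \<noteq> []" using assms by auto
  then show ?thesis
  using fac_L[OF assms(1), where v=v and a=0 and b="length v - 1" and c=c and d=d] assms fac_all[of v] by auto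
qed

lemma take_fac: "0 < q \<Longrightarrow> q \<le> length v \<Longrightarrow> take q v = fac v 0 (q - 1)"
  by (simp add: fac_def)

lemma butlast_fac: "a < b \<Longrightarrow> b < length v \<Longrightarrow> butlast (fac v a b) = fac v a (b - 1)"
  by (simp add: fac_def butlast_take)

lemma tl_fac: "a < b \<Longrightarrow> b < length v \<Longrightarrow> tl (fac v a b) = fac v (Suc a) b"
  by (simp add: fac_def tl_take drop_Suc tl_drop)

lemma fac_single: "p < length v \<Longrightarrow> fac v p p = [v ! p]"
  by (simp add: fac_def take_Suc_conv_app_nth)
  
lemma S_L: "factorial_lang L \<Longrightarrow> v \<in> L \<Longrightarrow> S L v = {}"
  unfolding S_def ddot_def using fac_in_L by fastforce

lemma S_finite: "finite (S L v)"
proof -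
  have "S L v \<subseteq> {..<length v} \<times> {..<length v}" unfolding S_def by auto
  thus ?thesis using finite_subset by blast
qed

lemma dIVT: "P 0 \<Longrightarrow> \<not> P n \<Longrightarrow> \<exists>k<n. P k \<and> \<not> P (Suc k)"
proof (induction n)
  case 0 thus ?case by simp
next
  case (Suc n)
  show ?case
  proof (cases "P n")
    case True thus ?thesis using Suc by auto
  next
    case False thus ?thesis using Suc by (metis less_SucI)
  qed
qed

lemma first_exists:
  assumes fl: "factorial_lang L" and sg: "\<forall>a. [a] \<in> L" and "v \<noteq> []" and "v \<notin> L"
  shows "\<exists>p q. (p, q) \<in> S L v \<and> take q v \<in> L \<and> p < q"
proof -
  have "\<exists>k<length v - 1. take (Suc k) v \<in> L \<and> \<not> take (Suc (Suc k)) v \<in> L"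
    apply (rule dIVT[where P="\<lambda>k. take (Suc k) v \<in> L"])
    using assms sg by (cases v; auto)+
  then obtain q0 where q0: "q0 < length v - 1" "take (Suc q0) v \<in> L" "take (Suc (Suc q0)) v \<notin> L" by blast
  define q where "q = Suc q0"
  have q: "q < length v" "take q v \<in> L" "take (Suc q) v \<notin> L" "0 < q" using q0 q_def by auto
  have "\<exists>k<q. fac v (q - k) q \<in> L \<and> fac v (q - Suc k) q \<notin> L"
    apply (rule dIVT[where P="\<lambda>k. fac v (q - k) q \<in> L"])
    using q sg fac_single[of q v] by (auto simp: fac_def)
  then obtain k where k: "k < q" "fac v (q - k) q \<in> L" "fac v (q - Suc k) q \<notin> L" by blast
  define p where "p = q - Suc k"
  have pq: "p < q" "Suc p = q - k" using k p_def by auto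
  have bl: "butlast (fac v p q) \<in> L"
  proof -
    have "fac v 0 (q - 1) \<in> L" using q take_fac[of q v] by auto
    hence "fac v p (q - 1) \<in> L" using fac_L[OF fl, of v 0 "q - 1" p "q - 1"] pq q by auto
    thus ?thesis using butlast_fac[of p q v] pq q by auto
  qed
  have tl: "tl (fac v p q) \<in> L" using tl_fac[of p q v] pq q k by auto
  have "fac v p q \<in> ddot L" unfolding ddot_def using bl tl k pq q fac_ne[of p q v] p_def by auto
  hence "(p, q) \<in> S L v" using pq q unfolding S_def by auto
  thus ?thesis using q pq by blast
qed

lemma ddot_lt: assumes sg: "\<forall>a. [a] \<in> L" and "(p,q) \<in> S L v" shows "p < q"
proof -
  have "p \<le> q" "q < length v" "fac v p q \<notin> L" using assms(2) unfolding S_def ddot_def by auto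
  thus ?thesis using fac_single[of p v] sg by (cases "p = q") auto
qed

lemma S_after:
  assumes fl: "factorial_lang L" and sg: "\<forall>a. [a] \<in> L" and pq: "(p, q) \<in> S L v" and tq: "take q v \<in> L"
    and pq': "(p', q') \<in> S L v" and ne: "(p', q') \<noteq> (p, q)"
  shows "p < p'"
proof (rule ccontr)
  assume "\<not> p < p'"
  hence le: "p' \<le> p" by simp
  have lt: "p < q" "p' < q'" using ddot_lt[OF sg] pq pq' by auto
  have A: "p \<le> q" "q < length v" "fac v p q \<notin> L" "p' \<le> q'" "q' < length v" "fac v p' q' \<notin> L"
    "butlast (fac v p' q') \<in> L" "tl (fac v p' q') \<in> L"
    using pq pq' unfolding S_def ddot_def by auto
  consider "q' < q" | "q' = q" | "q < q'" by linarith
  then show False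
  proof cases
    case 1
    have "fac v 0 (q - 1) \<in> L" using tq take_fac[of q v] lt A by auto
    moreover have "q' \<le> q - 1" "q - 1 < length v" using 1 A by auto
    ultimately have "fac v p' q' \<in> L" using fac_L[OF fl, of v 0 "q - 1" p' q'] A by auto
    thus False using A by auto
  next
    case 2
    hence "p' < p" using le ne by auto
    have "fac v (Suc p') q \<in> L" using A tl_fac[of p' q' v] lt 2 by auto
    hence "fac v p q \<in> L" using fac_L[OF fl, of v "Suc p'" q p q] 2 A \<open>p' < p\<close> by auto
    thus False using A by auto
  next
    case 3
    have "fac v p' (q' - 1) \<in> L" using A butlast_fac[of p' q' v] lt by auto
    moreover have "q \<le> q' - 1" "q' - 1 < length v" using 3 A by auto
    ultimately have "fac v p q \<in> L" using fac_L[OF fl, of v p' "q' - 1" p q] A le by auto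
    thus False using A by auto
  qed
qed

definition sh :: "nat \<Rightarrow> nat \<times> nat \<Rightarrow> nat \<times> nat" where "sh k = (\<lambda>(a, b). (a + k, b + k))"

lemma fac_drop: "fac (drop k v) a b = fac v (a + k) (b + k)"
  by (simp add: fac_def add.commute)

lemma S_drop: "x \<in> S L (drop k v) \<longleftrightarrow> sh k x \<in> S L v"
  by (cases x) (auto simp: S_def sh_def fac_drop)

lemma S_step:
  assumes fl: "factorial_lang L" and sg: "\<forall>a. [a] \<in> L" and pq: "(p, q) \<in> S L v" and tq: "take q v \<in> L"
  shows "S L v = insert (p, q) (sh (Suc p) ` S L (drop (Suc p) v))"
proof
  show "S L v \<subseteq> insert (p, q) (sh (Suc p) ` S L (drop (Suc p) v))"
  proof
    fix x assume x: "x \<in> S L v"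
    obtain p' q' where x': "x = (p', q')" by (cases x)
    show "x \<in> insert (p, q) (sh (Suc p) ` S L (drop (Suc p) v))"
    proof (cases "x = (p, q)")
      case False
      hence "p < p'" using S_after[OF fl sg pq tq, of p' q'] x x' by auto
      moreover have "p' \<le> q'" using x x' unfolding S_def by auto
      ultimately have "x = sh (Suc p) (p' - Suc p, q' - Suc p)" using x' by (auto simp: sh_def)
      moreover have "(p' - Suc p, q' - Suc p) \<in> S L (drop (Suc p) v)"
        using S_drop[where x="(p' - Suc p, q' - Suc p)" and k="Suc p" and L=L and v=v] x calculation by auto
      ultimately show ?thesis by blast
    qed simp
  qed
next
  show "insert (p, q) (sh (Suc p) ` S L (drop (Suc p) v)) \<subseteq> S L v"
    using pq S_drop by blast
qed

lemma occs_step: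
  assumes fl: "factorial_lang L" and sg: "\<forall>a. [a] \<in> L" and pq: "(p, q) \<in> S L v" and tq: "take q v \<in> L"
  shows "occs L v = (p, q) # map (sh (Suc p)) (occs L (drop (Suc p) v))"
proof -
  let ?xs = "occs L (drop (Suc p) v)"
  have s1: "sorted_wrt (<) ?xs" "set ?xs = S L (drop (Suc p) v)"
    by (simp_all add: occs_S S_finite strict_sorted_list_of_set)
  have mono: "\<And>a b. a < b \<Longrightarrow> sh (Suc p) a < sh (Suc p) b"
    by (auto simp: sh_def less_prod_def split: prod.splits)
  have s2: "sorted_wrt (<) (map (sh (Suc p)) ?xs)"
    using s1(1) by (induction ?xs) (auto simp: sorted_wrt_map intro: sorted_wrt_mono_rel[OF _ s1(1)] mono)
  have gt: "\<forall>y \<in> set (map (sh (Suc p)) ?xs). (p, q) < y"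
  proof
    fix y assume "y \<in> set (map (sh (Suc p)) ?xs)"
    then obtain a b where "y = (a + Suc p, b + Suc p)" by (auto simp: sh_def)
    thus "(p, q) < y" by (auto simp: less_prod_def)
  qed
  have "sorted_wrt (<) ((p, q) # map (sh (Suc p)) ?xs)" using s2 gt by simp
  moreover have "set ((p, q) # map (sh (Suc p)) ?xs) = S L v"
    using S_step[OF assms] s1 by simp
  ultimately show ?thesis using sls_sorted occs_S by metis
qed

lemma sc_L: "factorial_lang L \<Longrightarrow> v \<in> L \<Longrightarrow> sc L v = [v]"
  by (simp add: sc_def lcoords_def ddcoords_def occs_S S_L)

lemma map2_shift: "map2 (\<lambda>s e. take (e - s) (drop s v)) (map (\<lambda>x. x + k) xs) (map (\<lambda>x. x + k) ys)
   = map2 (\<lambda>s e. take (e - s) (drop s (drop k v))) xs ys"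
  by (simp add: zip_map_map case_prod_beta add.commute)

lemma lcoords_ne: "lcoords L v \<noteq> []"
  by (simp add: lcoords_def Let_def)

lemma sc_step:
  assumes fl: "factorial_lang L" and sg: "\<forall>a. [a] \<in> L" and pq: "(p, q) \<in> S L v" and tq: "take q v \<in> L"
  shows "sc L v = take q v # fac v p q # sc L (drop (Suc p) v)"
proof -
  let ?k = "Suc p" and ?v = "drop (Suc p) v"
  let ?os = "occs L ?v"
  have o: "occs L v = (p, q) # map (sh ?k) ?os" by (rule occs_step[OF assms])
  have lt: "p < q" "q < length v" using ddot_lt[OF sg pq] pq by (auto simp: S_def)
  have e1: "map (\<lambda>(p, q). Suc p) (map (sh ?k) ?os) = map (\<lambda>x. x + ?k) (map (\<lambda>(p, q). Suc p) ?os)"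
    by (auto simp: sh_def)
  have e2: "map snd (map (sh ?k) ?os) @ [length v] = map (\<lambda>x. x + ?k) (map snd ?os @ [length ?v])"
    using lt by (auto simp: sh_def)
  have lc: "lcoords L v = take q v # lcoords L ?v"
  proof -
    let ?F = "\<lambda>s e. take (e - s) (drop s v)"
    have "lcoords L v = map2 ?F (0 # Suc p # map (\<lambda>(p, q). Suc p) (map (sh ?k) ?os))
             (q # (map snd (map (sh ?k) ?os) @ [length v]))"
      unfolding lcoords_def Let_def o by simp
    also have "\<dots> = take q v # map2 ?F (Suc p # map (\<lambda>(p, q). Suc p) (map (sh ?k) ?os))
             (map snd (map (sh ?k) ?os) @ [length v])" by simp
    also have "Suc p # map (\<lambda>(p, q). Suc p) (map (sh ?k) ?os) = map (\<lambda>x. x + ?k) (0 # map (\<lambda>(p, q). Suc p) ?os)"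
      using e1 by simp
    also note e2
    also note map2_shift
    finally show ?thesis by (simp add: lcoords_def Let_def)
  qed
  have dd: "ddcoords L v = fac v p q # ddcoords L ?v"
    unfolding ddcoords_def o by (auto simp: sh_def fac_drop)
  show ?thesis
    unfolding sc_def lc dd using lcoords_ne[of L ?v]
    by (cases "lcoords L ?v") auto
qed

lemma fac_app_r: "q < length x \<Longrightarrow> fac (x @ y) p q = fac x p q"
  by (simp add: fac_def)

lemma fac_app_l: "length u \<le> p \<Longrightarrow> p \<le> q \<Longrightarrow> fac (u @ y) p q = fac y (p - length u) (q - length u)"
  by (simp add: fac_def)

lemma S_app_r: "(p, q) \<in> S L x \<Longrightarrow> (p, q) \<in> S L (x @ y)"
  by (auto simp: S_def fac_app_r)

lemma S_app_l: "(p, q) \<in> S L z \<Longrightarrow> (p + length u, q + length u) \<in> S L (u @ z)"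
  by (auto simp: S_def fac_app_l)

lemma take_le_app: "n \<le> length xs \<Longrightarrow> take n (xs @ ys) = take n xs" by simp

lemma sc_cases:
  assumes fl: "factorial_lang L" and sg: "\<forall>a. [a] \<in> L" and ne: "v \<noteq> []"
  obtains "v \<in> L" "sc L v = [v]"
  | p q where "v \<notin> L" "(p, q) \<in> S L v" "take q v \<in> L" "p < q" "q < length v"
      "sc L v = take q v # fac v p q # sc L (drop (Suc p) v)"
proof (cases "v \<in> L")
  case True thus ?thesis using that sc_L[OF fl] by auto
next
  case False
  then obtain p q where "(p, q) \<in> S L v" "take q v \<in> L" "p < q" using first_exists[OF fl sg ne] by blast
  thus ?thesis using that(2) False sc_step[OF fl sg] by (auto simp: S_def)
qed

lemma sc_ne: "sc L v \<noteq> []" by (simp add: sc_def)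

lemma sc_props:
  assumes fl: "factorial_lang L" and sg: "\<forall>a. [a] \<in> L"
  shows "v \<noteq> [] \<Longrightarrow> set (sc L v) \<subseteq> L \<union> ddot L \<and> hd (sc L v) \<in> L \<and> last (sc L v) \<in> L"
proof (induction "length v" arbitrary: v rule: less_induct)
  case less
  show ?case
  proof (cases rule: sc_cases[OF fl sg less.prems])
    case 1 thus ?thesis by simp
  next
    case (2 p q)
    have "drop (Suc p) v \<noteq> []" "length (drop (Suc p) v) < length v" using 2 by auto
    hence IH: "set (sc L (drop (Suc p) v)) \<subseteq> L \<union> ddot L \<and> last (sc L (drop (Suc p) v)) \<in> L"
      using less by blast
    have "fac v p q \<in> ddot L" using 2 by (auto simp: S_def)
    thus ?thesis using 2 IH sc_ne[of L "drop (Suc p) v"] by auto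
  qed
qed

lemma sc_app_hd:
  assumes fl: "factorial_lang L" and sg: "\<forall>a. [a] \<in> L" and zne: "z \<noteq> []" and zL: "z \<notin> L"
  shows "sc L (u @ z) = sc L (u @ hd (sc L z)) @ tl (sc L z)"
proof (induction "length u" arbitrary: u rule: less_induct)
  case less
  obtain p q where pq: "(p, q) \<in> S L z" "take q z \<in> L" "p < q" "q < length z"
      "sc L z = take q z # fac z p q # sc L (drop (Suc p) z)"
    using sc_cases[OF fl sg zne] zL by metis
  let ?z0 = "take q z"
  have z0: "hd (sc L z) = ?z0" "?z0 \<noteq> []" using pq by auto
  show ?case
  proof (cases "u @ ?z0 \<in> L")
    case True
    have "sc L (u @ z) = take (q + length u) (u @ z) # fac (u @ z) (p + length u) (q + length u)
            # sc L (drop (Suc (p + length u)) (u @ z))"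
      by (rule sc_step[OF fl sg S_app_l[OF pq(1)]]) (use True in simp)
    thus ?thesis using pq True sc_L[OF fl True] z0 by (simp add: fac_app_l)
  next
    case False
    obtain p' q' where pq': "(p', q') \<in> S L (u @ ?z0)" "take q' (u @ ?z0) \<in> L" "p' < q'" "q' < length (u @ ?z0)"
      "sc L (u @ ?z0) = take q' (u @ ?z0) # fac (u @ ?z0) p' q' # sc L (drop (Suc p') (u @ ?z0))"
      using sc_cases[OF fl sg, of "u @ ?z0"] False z0(2) by blast
    have pu: "p' < length u"
    proof (rule ccontr)
      assume "\<not> p' < length u"
      hence "fac (u @ ?z0) p' q' = fac ?z0 (p' - length u) (q' - length u)" using pq'(3) by (simp add: fac_app_l)
      moreover have "q' - length u < length ?z0"
      proof -
        have "length (u @ ?z0) = length u + length ?z0" by simp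
        thus ?thesis using pq'(3,4) \<open>\<not> p' < length u\<close> by linarith
      qed
      moreover have "fac ?z0 (p' - length u) (q' - length u) \<in> L"
        using fac_in_L[OF fl pq(2), of "p' - length u" "q' - length u"] pq'(3) calculation(2) by linarith
      ultimately show False using pq'(1) by (auto simp: S_def ddot_def)
    qed
    have e: "u @ z = (u @ ?z0) @ drop q z" by simp
    have s1: "(p', q') \<in> S L (u @ z)" using S_app_r[OF pq'(1)] e by metis
    have t1: "take q' (u @ z) = take q' (u @ ?z0)" using pq'(4) e take_le_app[of q' "u @ ?z0" "drop q z"] by (metis less_imp_le)
    have f1: "fac (u @ z) p' q' = fac (u @ ?z0) p' q'" using pq'(4) e fac_app_r by metis
    have A1: "sc L (u @ z) = take q' (u @ z) # fac (u @ z) p' q' # sc L (drop (Suc p') (u @ z))"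
      by (rule sc_step[OF fl sg s1]) (simp only: t1 pq'(2))
    have A2: "drop (Suc p') (u @ z) = drop (Suc p') u @ z" using pu by simp
    have A3: "sc L (drop (Suc p') u @ z) = sc L (drop (Suc p') u @ ?z0) @ tl (sc L z)"
    proof -
      have "length (drop (Suc p') u) < length u" using pu by simp
      thus ?thesis using less(1)[of "drop (Suc p') u"] z0(1) by simp
    qed
    have A4: "drop (Suc p') u @ ?z0 = drop (Suc p') (u @ ?z0)" using pu by simp
    have "sc L (u @ z) = take q' (u @ ?z0) # fac (u @ ?z0) p' q' # (sc L (drop (Suc p') (u @ ?z0)) @ tl (sc L z))"
      unfolding A1 A2 A3 A4 t1 f1 ..
    also have "\<dots> = sc L (u @ ?z0) @ tl (sc L z)" unfolding pq'(5) by simp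
    finally show ?thesis unfolding z0(1) .
  qed
qed

lemma sc_app_last:
  assumes fl: "factorial_lang L" and sg: "\<forall>a. [a] \<in> L"
  shows "w \<noteq> [] \<Longrightarrow> w \<notin> L \<Longrightarrow> sc L (w @ u) = butlast (sc L w) @ sc L (last (sc L w) @ u)"
proof (induction "length w" arbitrary: w rule: less_induct)
  case less
  obtain p q where pq: "(p, q) \<in> S L w" "take q w \<in> L" "p < q" "q < length w"
      "sc L w = take q w # fac w p q # sc L (drop (Suc p) w)"
    using sc_cases[OF fl sg less.prems(1)] less.prems(2) by metis
  have s1: "(p, q) \<in> S L (w @ u)" using S_app_r[OF pq(1)] .
  have "sc L (w @ u) = take q (w @ u) # fac (w @ u) p q # sc L (drop (Suc p) (w @ u))"
    by (rule sc_step[OF fl sg s1]) (use pq in simp)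
  also have "\<dots> = take q w # fac w p q # sc L (drop (Suc p) w @ u)" using pq by (simp add: fac_app_r)
  finally have E: "sc L (w @ u) = take q w # fac w p q # sc L (drop (Suc p) w @ u)" .
  let ?w = "drop (Suc p) w"
  have wne: "?w \<noteq> []" "length ?w < length w" using pq by auto
  show ?case
  proof (cases "?w \<in> L")
    case True
    thus ?thesis using E pq(5) sc_L[OF fl True] by simp
  next
    case False
    have "sc L (?w @ u) = butlast (sc L ?w) @ sc L (last (sc L ?w) @ u)" using less wne False by blast
    thus ?thesis using E pq(5) sc_ne[of L ?w] by simp
  qed
qed


lemma gprod_app: assumes "group G" "set xs \<subseteq> carrier G" "set ys \<subseteq> carrier G"
  shows "gprod G (xs @ ys) = gprod G xs \<otimes>\<^bsub>G\<^esub> gprod G ys \<and> gprod G xs \<in> carrier G"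
proof -
  interpret group G by fact
  have cl: "\<And>zs. set zs \<subseteq> carrier G \<Longrightarrow> gprod G zs \<in> carrier G"
  proof -
    fix zs :: "'a list" show "set zs \<subseteq> carrier G \<Longrightarrow> gprod G zs \<in> carrier G"
      by (induction zs) (auto simp: gprod_def)
  qed
  have "gprod G (xs @ ys) = gprod G xs \<otimes>\<^bsub>G\<^esub> gprod G ys" using assms(2)
    by (induction xs) (auto simp: gprod_def cl[OF assms(3), unfolded gprod_def] m_assoc cl[unfolded gprod_def])
  thus ?thesis using cl assms by auto
qed

lemma gprod_closed: "group G \<Longrightarrow> set xs \<subseteq> carrier G \<Longrightarrow> gprod G xs \<in> carrier G"
  using gprod_app[of G xs "[]"] by auto

lemma gprod_single: "group G \<Longrightarrow> x \<in> carrier G \<Longrightarrow> gprod G [x] = x"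
  by (simp add: gprod_def group.is_monoid monoid.r_one)

lemma tw1: "takeWhile isl (map Inl a @ Inr g # Y) = map Inl a"
  by (induction a) auto

lemma dw1: "dropWhile isl (map Inl a @ Inr g # Y) = Inr g # Y"
  by (induction a) auto

lemma tw_rev: "rev (takeWhile isl (rev (Y @ Inr g # map Inl b))) = map Inl b"
proof -
  have "rev (Y @ Inr g # map Inl b) = map Inl (rev b) @ Inr g # rev Y" by (simp add: rev_map)
  thus ?thesis by (simp add: tw1 rev_map)
qed

lemma projl_map: "map projl (map Inl a) = a" by (induction a) auto

lemma not_all_isl: "\<not> list_all isl (map Inl a @ Inr g # Y)" by (induction a) auto

lemma F1: "fcheck G L f (map Inl a @ Inr g # map Inl b) = gmerge G (fgrave G L f a @ Inr g # facute G L f b)"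
proof -
  let ?X = "map Inl a @ Inr g # map Inl b"
  have u0: "takeWhile isl ?X = map Inl a" by (rule tw1)
  have un: "rev (takeWhile isl (rev ?X)) = map Inl b" using tw_rev[of "map Inl a" g b] by simp
  have mid: "drop (length (map Inl a :: ('a + 'b) list)) (take (length ?X - length (map Inl b :: ('a + 'b) list)) ?X) = [Inr g]"
    by simp
  show ?thesis unfolding fcheck_def using not_all_isl[of a g "map Inl b"]
    by (simp only: Let_def u0 un mid if_False projl_map) simp
qed

lemma hatruns_blk: "c \<noteq> [] \<Longrightarrow> hatruns h (map Inl c @ [Inr g]) = [Inr (h c), Inr g]"
  by (cases c) (simp_all add: tw1[where Y="[]", simplified] dw1[where Y="[]", simplified] projl_map comp_def)

lemma F2: "c \<noteq> [] \<Longrightarrow> fcheck G L f (map Inl a @ Inr g # map Inl c @ Inr h # map Inl b)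
   = gmerge G (fgrave G L f a @ Inr g # Inr (fhat G L f c) # Inr h # facute G L f b)"
proof -
  assume c: "c \<noteq> []"
  let ?X = "map Inl a @ Inr g # map Inl c @ Inr h # map Inl b"
  have u0: "takeWhile isl ?X = map Inl a" by (rule tw1)
  have un: "rev (takeWhile isl (rev ?X)) = map Inl b" using tw_rev[of "map Inl a @ Inr g # map Inl c" h b] by simp
  have mid: "drop (length (map Inl a :: ('a + 'b) list)) (take (length ?X - length (map Inl b :: ('a + 'b) list)) ?X)
     = Inr g # (map Inl c @ [Inr h])"
    by simp
  show ?thesis unfolding fcheck_def using not_all_isl[of a g "map Inl c @ Inr h # map Inl b"] c
    by (simp only: Let_def u0 un mid if_False projl_map) (simp add: hatruns_blk)
qed

lemma gm_Inl: "gmerge G (map Inl a @ xs) = map Inl a @ gmerge G xs"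
  by (induction a) auto

lemma gm_tail: "gmerge G (Inr g # map Inl b) = Inr g # map Inl b"
  using gm_Inl[of G b "[]"] by (cases b) auto


lemma gm_tail2: "gmerge G (Inr g # map Inl b @ map Inl c) = Inr g # map Inl b @ map Inl c"
  using gm_tail[of G g "b @ c"] by simp

lemma sc_nonL:
  assumes fl: "factorial_lang L" and sg: "\<forall>a. [a] \<in> L" and "v \<noteq> []" "v \<notin> L"
  shows "\<exists>a d r. sc L v = a # d # r \<and> r \<noteq> []"
  using sc_cases[OF fl sg assms(3)] assms(4) sc_ne by metis

lemma notL_app:
  assumes fl: "factorial_lang L" and "w @ z \<in> L" "w \<noteq> []" "z \<noteq> []"
  shows "w \<in> L \<and> z \<in> L"
proof -
  have "w @ z = [] @ w @ z" "w @ z = w @ z @ []" by simp_all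
  thus ?thesis using assms unfolding factorial_lang_def by metis
qed

lemma butlast_sub: "set (map f xs) \<subseteq> C \<Longrightarrow> set (map f (butlast xs)) \<subseteq> C"
  by (auto dest: in_set_butlastD)

lemma tl_sub: "set (map f xs) \<subseteq> C \<Longrightarrow> set (map f (tl xs)) \<subseteq> C"
  by (cases xs) auto

lemma alg1: assumes "group G" "a \<in> carrier G" "b \<in> carrier G" "c \<in> carrier G"
  shows "a \<otimes>\<^bsub>G\<^esub> b = a \<otimes>\<^bsub>G\<^esub> inv\<^bsub>G\<^esub> c \<otimes>\<^bsub>G\<^esub> (c \<otimes>\<^bsub>G\<^esub> b)"
proof -
  interpret group G by fact
  have 1: "inv\<^bsub>G\<^esub> c \<otimes>\<^bsub>G\<^esub> (c \<otimes>\<^bsub>G\<^esub> b) = b" using assms by (simp add: m_assoc[symmetric])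
  show ?thesis using assms by (simp add: m_assoc 1)
qed

lemma alg2: assumes "group G" "a \<in> carrier G" "b \<in> carrier G" "c \<in> carrier G"
  shows "a \<otimes>\<^bsub>G\<^esub> b = a \<otimes>\<^bsub>G\<^esub> c \<otimes>\<^bsub>G\<^esub> inv\<^bsub>G\<^esub> c \<otimes>\<^bsub>G\<^esub> b"
proof -
  interpret group G by fact
  have 1: "c \<otimes>\<^bsub>G\<^esub> (inv\<^bsub>G\<^esub> c \<otimes>\<^bsub>G\<^esub> b) = b" using assms by (simp add: m_assoc[symmetric])
  show ?thesis using assms by (simp add: m_assoc 1)
qed

lemma alg3: assumes "group G" "a \<in> carrier G" "c \<in> carrier G"
  shows "a = a \<otimes>\<^bsub>G\<^esub> inv\<^bsub>G\<^esub> c \<otimes>\<^bsub>G\<^esub> c"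
  using alg1[OF assms(1,2) monoid.one_closed[OF group.is_monoid[OF assms(1)]] assms(3)] assms
  by (simp add: group.is_monoid monoid.r_one)

lemma alg4: assumes "group G" "b \<in> carrier G" "c \<in> carrier G"
  shows "b = c \<otimes>\<^bsub>G\<^esub> inv\<^bsub>G\<^esub> c \<otimes>\<^bsub>G\<^esub> b"
  using alg2[OF assms(1) monoid.one_closed[OF group.is_monoid[OF assms(1)]] assms(2,3)] assms
  by (simp add: group.is_monoid monoid.l_one)

theorem lemma1:
  fixes G :: "('g, 'b) monoid_scheme" and L :: "'a list set" and f :: "'a list \<Rightarrow> 'g"
    and w z :: "'a list"
  assumes "group G"
    and "L \<noteq> {}" and "[] \<notin> L" and "factorial_lang L"
    and "\<forall>a. [a] \<in> L"
    and "\<forall>v \<in> L \<union> ddot L. f v \<in> carrier G"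
    and "w \<noteq> []" and "z \<noteq> []"
  shows "fhat G L f (w @ z) =
           fhat G L f (w @ hd (sc L z)) \<otimes>\<^bsub>G\<^esub> inv\<^bsub>G\<^esub> (f (hd (sc L z))) \<otimes>\<^bsub>G\<^esub> fhat G L f z
       \<and> fhat G L f (w @ z) =
           fhat G L f w \<otimes>\<^bsub>G\<^esub> inv\<^bsub>G\<^esub> (f (last (sc L w))) \<otimes>\<^bsub>G\<^esub> fhat G L f (last (sc L w) @ z)
       \<and> fcheckA G L f (w @ z) = fcheck G L f (fcheckA G L f w @ fcheckA G L f z)"
proof -
  note grp = assms(1) and fl = assms(4) and sg = assms(5) and fc = assms(6)
  interpret group G by (rule grp)
  have scC: "\<And>v. v \<noteq> [] \<Longrightarrow> set (map f (sc L v)) \<subseteq> carrier G"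
    using sc_props[OF fl sg] fc by fastforce
  have hdL: "\<And>v. v \<noteq> [] \<Longrightarrow> hd (sc L v) \<in> L" and lastL: "\<And>v. v \<noteq> [] \<Longrightarrow> last (sc L v) \<in> L"
    using sc_props[OF fl sg] by blast+
  have hdne: "\<And>v. v \<noteq> [] \<Longrightarrow> hd (sc L v) \<noteq> []" by (metis hdL assms(3))
  have lastne: "\<And>v. v \<noteq> [] \<Longrightarrow> last (sc L v) \<noteq> []" by (metis lastL assms(3))
  have fP: "\<And>v. v \<noteq> [] \<Longrightarrow> fhat G L f v = gprod G (map f (sc L v))"
  proof -
    fix v :: "'a list" assume v: "v \<noteq> []"
    show "fhat G L f v = gprod G (map f (sc L v))"
    proof (cases "v \<in> L")
      case True thus ?thesis using sc_L[OF fl True] gprod_single[OF grp] fc v by (simp add: fhat_def)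
    qed (use v in \<open>simp add: fhat_def\<close>)
  qed
  have fhC: "\<And>v. v \<noteq> [] \<Longrightarrow> fhat G L f v \<in> carrier G" using fP scC gprod_closed[OF grp] by simp
  have fL: "\<And>v. v \<in> L \<Longrightarrow> f v \<in> carrier G" using fc by blast
  have gA: "\<And>xs ys. set xs \<subseteq> carrier G \<Longrightarrow> set ys \<subseteq> carrier G \<Longrightarrow> gprod G (xs @ ys) = gprod G xs \<otimes>\<^bsub>G\<^esub> gprod G ys"
    using gprod_app[OF grp] by blast
  have gC: "\<And>xs. set xs \<subseteq> carrier G \<Longrightarrow> gprod G xs \<in> carrier G" using gprod_closed[OF grp] by blast
  have a1: "fhat G L f (w @ z) =
           fhat G L f (w @ hd (sc L z)) \<otimes>\<^bsub>G\<^esub> inv\<^bsub>G\<^esub> (f (hd (sc L z))) \<otimes>\<^bsub>G\<^esub> fhat G L f z"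
  proof (cases "z \<in> L")
    case True
    have "fhat G L f z = f z" using True assms(8) by (simp add: fhat_def)
    moreover have "hd (sc L z) = z" using sc_L[OF fl True] by simp
    moreover have "fhat G L f (w @ z) \<in> carrier G" using fhC assms(7) by simp
    ultimately show ?thesis using fL[OF True] alg3[OF grp] by simp
  next
    case False
    let ?z0 = "hd (sc L z)" and ?T = "tl (sc L z)"
    have e: "sc L (w @ z) = sc L (w @ ?z0) @ ?T" by (rule sc_app_hd[OF fl sg assms(8) False])
    have ez: "sc L z = ?z0 # ?T" using sc_ne[of L z] by simp
    have c1: "set (map f (sc L (w @ ?z0))) \<subseteq> carrier G" "set (map f ?T) \<subseteq> carrier G" "f ?z0 \<in> carrier G"
    proof -
      have cz: "set (map f (?z0 # ?T)) \<subseteq> carrier G" using scC[OF assms(8)] ez by metis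
      thus "set (map f (sc L (w @ ?z0))) \<subseteq> carrier G" "set (map f ?T) \<subseteq> carrier G" "f ?z0 \<in> carrier G"
        using scC[of "w @ ?z0"] assms(7) by auto
    qed
    have "fhat G L f (w @ z) = fhat G L f (w @ ?z0) \<otimes>\<^bsub>G\<^esub> gprod G (map f ?T)"
      using fP[of "w @ z"] fP[of "w @ ?z0"] e gA c1 assms(7) by simp
    moreover have "fhat G L f z = f ?z0 \<otimes>\<^bsub>G\<^esub> gprod G (map f ?T)"
    proof -
      have "fhat G L f z = gprod G (map f (?z0 # ?T))" using fP[OF assms(8)] ez by metis
      thus ?thesis by (simp add: gprod_def)
    qed
    moreover have "fhat G L f (w @ ?z0) \<in> carrier G" using fhC assms(7) by simp
    ultimately show ?thesis using alg1[OF grp _ gC[OF c1(2)] c1(3)] by simp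
  qed
  have a2: "fhat G L f (w @ z) =
           fhat G L f w \<otimes>\<^bsub>G\<^esub> inv\<^bsub>G\<^esub> (f (last (sc L w))) \<otimes>\<^bsub>G\<^esub> fhat G L f (last (sc L w) @ z)"
  proof (cases "w \<in> L")
    case True
    have "fhat G L f w = f w" using True assms(7) by (simp add: fhat_def)
    moreover have "last (sc L w) = w" using sc_L[OF fl True] by simp
    moreover have "fhat G L f (w @ z) \<in> carrier G" using fhC assms(7) by simp
    ultimately show ?thesis using fL[OF True] alg4[OF grp] by simp
  next
    case False
    let ?B = "butlast (sc L w)" and ?wm = "last (sc L w)"
    have e: "sc L (w @ z) = ?B @ sc L (?wm @ z)" by (rule sc_app_last[OF fl sg assms(7) False])
    have ew: "sc L w = ?B @ [?wm]" using sc_ne[of L w] by simp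
    have cw: "set (map f (?B @ [?wm])) \<subseteq> carrier G" using scC[OF assms(7)] ew by metis
    hence c1: "set (map f ?B) \<subseteq> carrier G" "f ?wm \<in> carrier G" by auto
    have c2: "set (map f (sc L (?wm @ z))) \<subseteq> carrier G" using scC assms(8) by simp
    have "fhat G L f (w @ z) = gprod G (map f ?B) \<otimes>\<^bsub>G\<^esub> fhat G L f (?wm @ z)"
      using fP[of "w @ z"] fP[of "?wm @ z"] e gA[OF c1(1) c2] assms(7,8) by simp
    moreover have "fhat G L f w = gprod G (map f ?B) \<otimes>\<^bsub>G\<^esub> f ?wm"
    proof -
      have "fhat G L f w = gprod G (map f (?B @ [?wm]))" using fP[OF assms(7)] ew by metis
      thus ?thesis using gA[OF c1(1), of "[f ?wm]"] c1 gprod_single[OF grp c1(2)] by simp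
    qed
    moreover have "fhat G L f (?wm @ z) \<in> carrier G" using fhC assms(8) by simp
    ultimately show ?thesis using alg2[OF grp gC[OF c1(1)] _ c1(2)] by simp
  qed
  have fcL: "\<And>v. v \<in> L \<Longrightarrow> fcheckA G L f v = map Inl v \<and> fgrave G L f v = map Inl v \<and> facute G L f v = map Inl v"
    by (simp add: fcheckA_def fgrave_def facute_def)
  have fcN: "\<And>v. v \<noteq> [] \<Longrightarrow> v \<notin> L \<Longrightarrow> fcheckA G L f v = map Inl (hd (sc L v)) @
        Inr (gprod G (map f (butlast (tl (sc L v))))) # map Inl (last (sc L v))"
    by (simp add: fcheckA_def)
  have fgN: "\<And>v. v \<noteq> [] \<Longrightarrow> v \<notin> L \<Longrightarrow> fgrave G L f v = map Inl (hd (sc L v)) @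
        [Inr (gprod G (map f (tl (sc L v))))]"
    by (simp add: fgrave_def)
  have faN: "\<And>v. v \<noteq> [] \<Longrightarrow> v \<notin> L \<Longrightarrow> facute G L f v =
        Inr (gprod G (map f (butlast (sc L v)))) # map Inl (last (sc L v))"
    by (simp add: facute_def)
  have b: "fcheckA G L f (w @ z) = fcheck G L f (fcheckA G L f w @ fcheckA G L f z)"
  proof (cases "w \<in> L")
    case wL: True
    show ?thesis
    proof (cases "z \<in> L")
      case zL: True
      have "list_all isl (map Inl (w @ z) :: ('a + 'g) list)" by (auto simp add: list_all_iff)
      thus ?thesis using fcL[OF wL] fcL[OF zL] by (simp add: fcheck_def projl_map comp_def)
    next
      case zN: False
      obtain z0 d r where ez: "sc L z = z0 # d # r" and rne: "r \<noteq> []" using sc_nonL[OF fl sg assms(8) zN] by blast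
      have cz: "set (map f (z0 # d # r)) \<subseteq> carrier G" using scC[OF assms(8)] ez by metis
      have zmL: "last r \<in> L" using lastL[OF assms(8)] ez rne by simp
      have wzN: "w @ z \<notin> L" using notL_app[OF fl _ assms(7,8)] zN by blast
      let ?h = "gprod G (map f (butlast (d # r)))"
      have X: "fcheckA G L f w @ fcheckA G L f z = map Inl (w @ z0) @ Inr ?h # map Inl (last r)"
        using fcL[OF wL] fcN[OF assms(8) zN] ez rne by simp
      have Y: "fcheck G L f (fcheckA G L f w @ fcheckA G L f z) = gmerge G (fgrave G L f (w @ z0) @ Inr ?h # map Inl (last r))"
        unfolding X F1 using fcL[OF zmL] by simp
      have eS: "sc L (w @ z) = sc L (w @ z0) @ d # r" using sc_app_hd[OF fl sg assms(8) zN, of w] ez by simp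
      have ch: "set (map f (butlast (d # r))) \<subseteq> carrier G" using cz butlast_sub[of f "d # r"] by simp
      show ?thesis
      proof (cases "w @ z0 \<in> L")
        case True
        have "sc L (w @ z) = (w @ z0) # d # r" using eS sc_L[OF fl True] by simp
        thus ?thesis unfolding Y using fcL[OF True] fcN[of "w @ z"] wzN assms(7) rne
          by (simp add: gm_Inl gm_tail)
      next
        case False
        let ?s = "sc L (w @ z0)"
        have sne: "?s \<noteq> []" by (rule sc_ne)
        have cs: "set (map f (tl ?s)) \<subseteq> carrier G" using tl_sub[OF scC[of "w @ z0"]] assms(7) by simp
        have bt: "butlast (tl (sc L (w @ z))) = tl ?s @ butlast (d # r)" using eS sne by (simp add: butlast_append)
        have "fcheckA G L f (w @ z) = map Inl (hd ?s) @ Inr (gprod G (map f (tl ?s)) \<otimes>\<^bsub>G\<^esub> ?h) # map Inl (last r)"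
          using fcN[of "w @ z"] wzN assms(7) bt eS sne rne gA[OF cs ch] by simp
        moreover have "fcheck G L f (fcheckA G L f w @ fcheckA G L f z) =
            map Inl (hd ?s) @ Inr (gprod G (map f (tl ?s)) \<otimes>\<^bsub>G\<^esub> ?h) # map Inl (last r)"
          unfolding Y using fgN[of "w @ z0"] False assms(7) by (simp add: gm_Inl gm_tail)
        ultimately show ?thesis by simp
      qed
    qed
  next
    case wN: False
    obtain w0 d r where ew: "sc L w = w0 # d # r" and rne: "r \<noteq> []" using sc_nonL[OF fl sg assms(7) wN] by blast
    have cw: "set (map f (w0 # d # r)) \<subseteq> carrier G" using scC[OF assms(7)] ew by metis
    have w0L: "w0 \<in> L" using hdL[OF assms(7)] ew by simp
    have wmL: "last r \<in> L" using lastL[OF assms(7)] ew rne by simp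
    have wmne: "last r \<noteq> []" using wmL assms(3) by metis
    have wzN: "w @ z \<notin> L" using notL_app[OF fl _ assms(7,8)] wN by blast
    let ?g = "gprod G (map f (butlast (d # r)))"
    have cg: "set (map f (butlast (d # r))) \<subseteq> carrier G" using cw butlast_sub[of f "d # r"] by simp
    have eS: "sc L (w @ z) = w0 # butlast (d # r) @ sc L (last r @ z)"
      using sc_app_last[OF fl sg assms(7) wN, of z] ew rne by simp
    have fw: "fcheckA G L f w = map Inl w0 @ Inr ?g # map Inl (last r)"
      using fcN[OF assms(7) wN] ew rne by simp
    show ?thesis
    proof (cases "z \<in> L")
      case zL: True
      have X: "fcheckA G L f w @ fcheckA G L f z = map Inl w0 @ Inr ?g # map Inl (last r @ z)"
        using fw fcL[OF zL] by simp
      have Y: "fcheck G L f (fcheckA G L f w @ fcheckA G L f z) = gmerge G (map Inl w0 @ Inr ?g # facute G L f (last r @ z))"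
        unfolding X F1 using fcL[OF w0L] by simp
      show ?thesis
      proof (cases "last r @ z \<in> L")
        case True
        have "sc L (w @ z) = w0 # butlast (d # r) @ [last r @ z]" using eS sc_L[OF fl True] by simp
        thus ?thesis unfolding Y using fcL[OF True] fcN[of "w @ z"] wzN assms(7) rne
          by (simp add: gm_Inl gm_tail gm_tail2)
      next
        case False
        let ?t = "sc L (last r @ z)"
        have tne: "?t \<noteq> []" by (rule sc_ne)
        have ct: "set (map f (butlast ?t)) \<subseteq> carrier G" using butlast_sub[OF scC[of "last r @ z"]] wmne by simp
        have bt: "butlast (tl (sc L (w @ z))) = butlast (d # r) @ butlast ?t" using eS tne by (simp add: butlast_append)
        have "fcheckA G L f (w @ z) = map Inl w0 @ Inr (?g \<otimes>\<^bsub>G\<^esub> gprod G (map f (butlast ?t))) # map Inl (last ?t)"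
          using fcN[of "w @ z"] wzN assms(7) bt eS tne gA[OF cg ct] by simp
        moreover have "fcheck G L f (fcheckA G L f w @ fcheckA G L f z) =
            map Inl w0 @ Inr (?g \<otimes>\<^bsub>G\<^esub> gprod G (map f (butlast ?t))) # map Inl (last ?t)"
          unfolding Y using faN[of "last r @ z"] False wmne by (simp add: gm_Inl gm_tail)
        ultimately show ?thesis by simp
      qed
    next
      case zN: False
      obtain z0 e s' where ez: "sc L z = z0 # e # s'" and sne: "s' \<noteq> []" using sc_nonL[OF fl sg assms(8) zN] by blast
      have cz: "set (map f (z0 # e # s')) \<subseteq> carrier G" using scC[OF assms(8)] ez by metis
      have zmL: "last s' \<in> L" using lastL[OF assms(8)] ez sne by simp
      let ?h = "gprod G (map f (butlast (e # s')))"
      have ch: "set (map f (butlast (e # s'))) \<subseteq> carrier G" using cz butlast_sub[of f "e # s'"] by simp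
      have c0: "last r @ z0 \<noteq> []" using wmne by simp
      let ?x = "fhat G L f (last r @ z0)"
      have X: "fcheckA G L f w @ fcheckA G L f z = map Inl w0 @ Inr ?g # map Inl (last r @ z0) @ Inr ?h # map Inl (last s')"
        using fw fcN[OF assms(8) zN] ez sne by simp
      have Y: "fcheck G L f (fcheckA G L f w @ fcheckA G L f z) = map Inl w0 @ Inr (?g \<otimes>\<^bsub>G\<^esub> ?x \<otimes>\<^bsub>G\<^esub> ?h) # map Inl (last s')"
        unfolding X F2[OF c0] using fcL[OF w0L] fcL[OF zmL] by (simp add: gm_Inl gm_tail)
      have eS2: "sc L (w @ z) = w0 # butlast (d # r) @ sc L (last r @ z0) @ e # s'"
        using eS sc_app_hd[OF fl sg assms(8) zN, of "last r"] ez by simp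
      let ?p = "sc L (last r @ z0)"
      have cp: "set (map f ?p) \<subseteq> carrier G" using scC c0 by simp
      have bt: "butlast (tl (sc L (w @ z))) = butlast (d # r) @ ?p @ butlast (e # s')" using eS2 by (simp add: butlast_append)
      have xP: "?x = gprod G (map f ?p)" using fP[OF c0] .
      have "gprod G (map f (butlast (tl (sc L (w @ z))))) = ?g \<otimes>\<^bsub>G\<^esub> ?x \<otimes>\<^bsub>G\<^esub> ?h"
        unfolding bt xP using gA cg cp ch gC by (simp add: m_assoc)
      hence "fcheckA G L f (w @ z) = map Inl w0 @ Inr (?g \<otimes>\<^bsub>G\<^esub> ?x \<otimes>\<^bsub>G\<^esub> ?h) # map Inl (last s')"
        using fcN[of "w @ z"] wzN assms(7) eS2 sne by simp
      thus ?thesis using Y by simp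
    qed
  qed
  show ?thesis using a1 a2 b by blast
qed

end
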